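(* The numbers $D_2(\boldsymbol m)$, $\boldsymbol m\in\mathscr F$, defined by $D_2(\boldsymbol 0):=1$ and $D_2(\boldsymbol m):=\sum_{\mathfrak u\subseteq{\rm supp}(\boldsymbol m),\,0\ne|\mathfrak u|\le2}D_2(\boldsymbol m-\boldsymbol e_{\mathfrak u})$ for $\boldsymbol m\ne\boldsymbol 0$ (with $\boldsymbol e_{\mathfrak u}=\sum_{j\in\mathfrak u}\boldsymbol e_j$), satisfy $$D_2(\boldsymbol m)\le|\boldsymbol m|!\,a_{|\boldsymbol m|}\quad\text{for all }\boldsymbol m\in\mathscr F,\qquad a_k:=\frac{(1+\sqrt3)^{k+1}-(1-\sqrt3)^{k+1}}{2^{k+1}\sqrt3},\ k\ge0.$$
   Context: $\mathscr F$ is the set of finitely supported multi-indices in $\mathbb N_0^{\mathbb N}$; ${\rm supp}(\boldsymbol m)=\{j:m_j\ne0\}$, $|\boldsymbol m|=\sum m_j$, $\boldsymbol e_j$ the $j$th unit multi-index. *)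

theory Defs
  imports "HOL-Analysis.Analysis" "HOL-Library.Poly_Mapping"
begin

text \<open>Finitely supported multi-indices F are the poly_mapping type from nat to nat.
  supp m = Poly_Mapping.keys m; |m| = sum of entries.\<close>

definition mabs :: "(nat \<Rightarrow>\<^sub>0 nat) \<Rightarrow> nat" where
  "mabs m = (\<Sum>j\<in>Poly_Mapping.keys m. Poly_Mapping.lookup m j)"

definition e_set :: "nat set \<Rightarrow> (nat \<Rightarrow>\<^sub>0 nat)" where
  "e_set u = (\<Sum>j\<in>u. Poly_Mapping.single j 1)"

lemma mabs_decr:
  assumes "m \<noteq> 0" "u \<subseteq> Poly_Mapping.keys m" "u \<noteq> {}"
  shows "mabs (m - e_set u) < mabs m"
proof -
  have fu: "finite u" using assms(2) finite_subset finite_keys by blast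
  have lk: "Poly_Mapping.lookup (e_set u) j = (if j \<in> u then 1 else 0)" for j
    unfolding e_set_def using fu
    by (induction u rule: finite_induct) (auto simp: lookup_add lookup_single when_def)
  have ms: "mabs p = (\<Sum>j\<in>Poly_Mapping.keys m. Poly_Mapping.lookup p j)" if "Poly_Mapping.keys p \<subseteq> Poly_Mapping.keys m" for p
    unfolding mabs_def using that
    by (intro sum.mono_neutral_left) (auto simp: in_keys_iff)
  have sub: "Poly_Mapping.keys (m - e_set u) \<subseteq> Poly_Mapping.keys m"
    by (auto simp: in_keys_iff lookup_minus)
  obtain j0 where j0: "j0 \<in> u" using assms(3) by auto
  have "mabs (m - e_set u) = (\<Sum>j\<in>Poly_Mapping.keys m. Poly_Mapping.lookup m j - Poly_Mapping.lookup (e_set u) j)"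
    using ms[OF sub] by (simp add: lookup_minus)
  also have "\<dots> < (\<Sum>j\<in>Poly_Mapping.keys m. Poly_Mapping.lookup m j)"
  proof (rule sum_strict_mono_ex1)
    show "finite (Poly_Mapping.keys m)" by simp
    show "\<forall>x\<in>Poly_Mapping.keys m. Poly_Mapping.lookup m x - Poly_Mapping.lookup (e_set u) x \<le> Poly_Mapping.lookup m x" by auto
    show "\<exists>a\<in>Poly_Mapping.keys m. Poly_Mapping.lookup m a - Poly_Mapping.lookup (e_set u) a < Poly_Mapping.lookup m a"
      using j0 assms(2) by (intro bexI[of _ j0]) (auto simp: lk in_keys_iff)
  qed
  finally show ?thesis by (simp add: mabs_def)
qed

function D2 :: "(nat \<Rightarrow>\<^sub>0 nat) \<Rightarrow> nat" where
  "D2 m = (if m = 0 then 1 else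
     (\<Sum>u\<in>{u. u \<subseteq> Poly_Mapping.keys m \<and> u \<noteq> {} \<and> card u \<le> 2}. D2 (m - e_set u)))"
  by auto
termination
  by (relation "Wellfounded.measure mabs") (auto intro: mabs_decr)

definition a_seq :: "nat \<Rightarrow> real" where
  "a_seq k = ((1 + sqrt 3) ^ (k + 1) - (1 - sqrt 3) ^ (k + 1)) / (2 ^ (k + 1) * sqrt 3)"

end

theory Submission
  imports Defs
begin

lemma lookup_e_set: "finite u \<Longrightarrow> Poly_Mapping.lookup (e_set u) j = (if j \<in> u then 1 else 0)"
  unfolding e_set_def
  by (induction u rule: finite_induct) (auto simp: lookup_add lookup_single when_def)

lemma mabs_sub:
  assumes "u \<subseteq> Poly_Mapping.keys m"
  shows "mabs (m - e_set u) + card u = mabs m"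
proof -
  define K where "K = Poly_Mapping.keys m"
  have fK: "finite K" by (simp add: K_def)
  have fu: "finite u" using assms fK K_def finite_subset by blast
  have ms: "mabs p = (\<Sum>j\<in>K. Poly_Mapping.lookup p j)" if "Poly_Mapping.keys p \<subseteq> K" for p
    unfolding mabs_def using that fK
    by (intro sum.mono_neutral_left) (auto simp: in_keys_iff)
  have sub: "Poly_Mapping.keys (m - e_set u) \<subseteq> K"
    by (auto simp: in_keys_iff lookup_minus K_def)
  have "mabs (m - e_set u) = (\<Sum>j\<in>K. Poly_Mapping.lookup m j - Poly_Mapping.lookup (e_set u) j)"
    using ms[OF sub] by (simp add: lookup_minus)
  also have "\<dots> = (\<Sum>j\<in>K. Poly_Mapping.lookup m j) - (\<Sum>j\<in>K. Poly_Mapping.lookup (e_set u) j)"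
    by (rule sum_subtractf_nat) (use assms in \<open>auto simp: lookup_e_set[OF fu] K_def in_keys_iff\<close>)
  also have "(\<Sum>j\<in>K. Poly_Mapping.lookup (e_set u) j) = card u"
  proof -
    have "(\<Sum>j\<in>K. Poly_Mapping.lookup (e_set u) j) = (\<Sum>j\<in>K. if j \<in> u then 1 else 0)"
      by (simp add: lookup_e_set[OF fu])
    also have "\<dots> = card (K \<inter> u)" using fK by (simp add: sum.If_cases)
    also have "K \<inter> u = u" using assms K_def by blast
    finally show ?thesis .
  qed
  also have "(\<Sum>j\<in>K. Poly_Mapping.lookup m j) = mabs m" by (simp add: mabs_def K_def)
  finally have "mabs (m - e_set u) = mabs m - card u" .
  moreover have "card u \<le> mabs m"
  proof -
    have "card u \<le> card K" using assms fK K_def by (simp add: card_mono)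
    also have "card K = (\<Sum>j\<in>K. 1)" by simp
    also have "\<dots> \<le> (\<Sum>j\<in>K. Poly_Mapping.lookup m j)"
      by (rule sum_mono) (auto simp: K_def in_keys_iff)
    finally show ?thesis by (simp add: mabs_def K_def)
  qed
  ultimately show ?thesis by simp
qed

lemma card_keys_le: "card (Poly_Mapping.keys m) \<le> mabs m"
  using mabs_sub[of "Poly_Mapping.keys m" m] by simp

definition r1 :: real where "r1 = (1 + sqrt 3) / 2"
definition r2 :: real where "r2 = (1 - sqrt 3) / 2"

lemma a_seq_alt: "a_seq k = (r1 ^ (k+1) - r2 ^ (k+1)) / sqrt 3"
proof -
  have e1: "(1 + sqrt 3) ^ (k + 1) / 2 ^ (k+1) = r1 ^ (k+1)" unfolding r1_def by (rule power_divide[symmetric])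
  have e2: "(1 - sqrt 3) ^ (k + 1) / 2 ^ (k+1) = r2 ^ (k+1)" unfolding r2_def by (rule power_divide[symmetric])
  have "a_seq k = (((1 + sqrt 3) ^ (k + 1) - (1 - sqrt 3) ^ (k + 1)) / 2 ^ (k + 1)) / sqrt 3"
    unfolding a_seq_def by (simp only: divide_divide_eq_left)
  also have "\<dots> = ((1 + sqrt 3) ^ (k + 1) / 2 ^ (k+1) - (1 - sqrt 3) ^ (k + 1) / 2 ^ (k+1)) / sqrt 3"
    by (simp only: diff_divide_distrib)
  finally show ?thesis by (simp only: e1 e2)
qed

lemma r_sq: "r1*r1 = r1 + 1/2" "r2*r2 = r2 + 1/2"
  by (simp_all add: r1_def r2_def algebra_simps add_divide_distrib diff_divide_distrib)

lemma pow_rec: assumes "(r::real)*r = r + 1/2" shows "r^(k+3) = r^(k+2) + r^(k+1)/2"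
proof -
  have c: "r^3 = r*r + r/2" using assms by (simp add: power3_eq_cube algebra_simps)
  show ?thesis by (simp add: power_add c power2_eq_square algebra_simps)
qed

lemma alg: "((a2 + a1/2) - (b2 + b1/2))/(s::real) = (a2-b2)/s + ((a1-b1)/s)/2"
  by (cases "s = 0") (simp_all add: field_simps)

lemma a_rec: "a_seq (k+2) = a_seq (k+1) + a_seq k / 2"
proof -
  have s: "a_seq (k+2) = (r1 ^ (k+3) - r2 ^ (k+3)) / sqrt 3"
       "a_seq (k+1) = (r1 ^ (k+2) - r2 ^ (k+2)) / sqrt 3"
  proof -
    have e: "k+2+1 = k+3" "k+1+1 = k+2" by simp_all
    show "a_seq (k+2) = (r1 ^ (k+3) - r2 ^ (k+3)) / sqrt 3" using a_seq_alt[of "k+2"] unfolding e .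
    show "a_seq (k+1) = (r1 ^ (k+2) - r2 ^ (k+2)) / sqrt 3" using a_seq_alt[of "k+1"] unfolding e .
  qed
  show ?thesis unfolding s a_seq_alt[of k] pow_rec[OF r_sq(1)] pow_rec[OF r_sq(2)]
    by (rule alg)
qed

lemma a0: "a_seq 0 = 1"
  by (simp add: a_seq_def)

lemma a1: "a_seq 1 = 1"
proof -
  have "(1 + sqrt 3) * (1 + sqrt 3) - (1 - sqrt 3) * (1 - sqrt 3) = 4 * sqrt 3" by (simp add: algebra_simps)
  then show ?thesis by (simp add: a_seq_def power2_eq_square)
qed

lemma a_ge1: "a_seq k \<ge> 1 \<and> a_seq (k+1) \<ge> 1"
proof (induction k)
  case 0 then show ?case using a0 a1 by simp
next
  case (Suc k)
  have "a_seq (k+2) \<ge> 1" using Suc a_rec[of k] by linarith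
  then show ?case using Suc by simp
qed

lemma a_nonneg: "a_seq k \<ge> 0"
  using a_ge1[of k] by linarith

declare D2.simps[simp del]
lemma fin_alg: fixes N F A B :: real shows "(N+2) * ((N+1)*(F*A)) + ((N+2)*(N+1)/2) * (F*B) = (N+2)*(N+1)*F*(A + B/2)"
  by (simp add: field_simps)

lemma two_choose: "2 * ((k+2) choose 2) = (k+2) * (k+1)"
proof (induction k)
  case 0 then show ?case by (simp add: numeral_2_eq_2)
next
  case (Suc k)
  have "Suc k + 2 choose 2 = (k + 2) + ((k+2) choose 2)"
    by (simp add: numeral_2_eq_2)
  then show ?case using Suc by (simp add: algebra_simps)
qed

theorem lemmaA2:
  fixes m :: "nat \<Rightarrow>\<^sub>0 nat"
  shows "real (D2 m) \<le> fact (mabs m) * a_seq (mabs m)"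
proof (induction m rule: D2.induct)
  case (1 m)
  show ?case
  proof (cases "m = 0")
    case True
    then show ?thesis by (simp add: D2.simps mabs_def a0)
  next
    case False
    define K where "K = Poly_Mapping.keys m"
    define n where "n = mabs m"
    define s where "s = card K"
    define b where "b k = fact k * a_seq k" for k
    have fK: "finite K" by (simp add: K_def)
    have sn: "s \<le> n" using card_keys_le s_def K_def n_def by simp
    define S1 where "S1 = {u. u \<subseteq> K \<and> card u = 1}"
    define S2 where "S2 = {u. u \<subseteq> K \<and> card u = 2}"
    have fin: "finite S1" "finite S2" using fK unfolding S1_def S2_def
      by (auto intro: finite_subset[of _ "Pow K"])
    have Seq: "{u. u \<subseteq> Poly_Mapping.keys m \<and> u \<noteq> {} \<and> card u \<le> 2} = S1 \<union> S2"
    proof -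
      have "(u \<noteq> {} \<and> card u \<le> 2) = (card u = 1 \<or> card u = 2)" if "u \<subseteq> K" for u
      proof -
        have fu: "finite u" using that fK finite_subset by blast
        have "u \<noteq> {} \<longleftrightarrow> card u \<noteq> 0" using fu by simp
        then show ?thesis by arith
      qed
      then show ?thesis unfolding S1_def S2_def K_def by blast
    qed
    have disj: "S1 \<inter> S2 = {}" by (auto simp: S1_def S2_def)
    have cS1: "card S1 = s" using n_subsets[OF fK, of 1] by (simp add: S1_def s_def)
    have cS2: "card S2 = s choose 2" using n_subsets[OF fK, of 2] by (simp add: S2_def s_def)
    have IH: "real (D2 (m - e_set u)) \<le> b (n - card u)" if "u \<in> S1 \<union> S2" for u
    proof -
      have u: "u \<in> {u. u \<subseteq> Poly_Mapping.keys m \<and> u \<noteq> {} \<and> card u \<le> 2}" using that Seq by simp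
      have "mabs (m - e_set u) = n - card u" using mabs_sub[of u m] u n_def by auto
      then show ?thesis using "1"[OF False u] b_def by simp
    qed
    have "real (D2 m) = (\<Sum>u\<in>S1 \<union> S2. real (D2 (m - e_set u)))"
      by (subst D2.simps) (simp add: False Seq)
    also have "\<dots> = (\<Sum>u\<in>S1. real (D2 (m - e_set u))) + (\<Sum>u\<in>S2. real (D2 (m - e_set u)))"
      using fin disj by (simp add: sum.union_disjoint)
    also have "\<dots> \<le> real s * b (n - 1) + real (s choose 2) * b (n - 2)"
    proof (rule add_mono)
      have "(\<Sum>u\<in>S1. real (D2 (m - e_set u))) \<le> (\<Sum>u\<in>S1. b (n - 1))"
      proof (rule sum_mono)
        fix u assume u: "u \<in> S1"
        then have "card u = 1" by (simp add: S1_def)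
        then show "real (D2 (m - e_set u)) \<le> b (n - 1)" using IH[of u] u by simp
      qed
      then show "(\<Sum>u\<in>S1. real (D2 (m - e_set u))) \<le> real s * b (n - 1)" using cS1 by simp
      have "(\<Sum>u\<in>S2. real (D2 (m - e_set u))) \<le> (\<Sum>u\<in>S2. b (n - 2))"
      proof (rule sum_mono)
        fix u assume u: "u \<in> S2"
        then have "card u = 2" by (simp add: S2_def)
        then show "real (D2 (m - e_set u)) \<le> b (n - 2)" using IH[of u] u by simp
      qed
      then show "(\<Sum>u\<in>S2. real (D2 (m - e_set u))) \<le> real (s choose 2) * b (n - 2)" using cS2 by simp
    qed
    also have "\<dots> \<le> b n"
    proof -
      have n1: "n \<ge> 1"
      proof (rule ccontr)
        assume "\<not> n \<ge> 1"
        then have "n = 0" by simp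
        then have "K = {}" using sn s_def fK by simp
        then show False using False K_def by simp
      qed
      have bnn: "b k \<ge> 0" for k using a_nonneg b_def by simp
      show ?thesis
      proof (cases "n = 1")
        case True
        then have "s \<le> 1" using sn by simp
        then have "s choose 2 = 0" by simp
        then have h1: "real (s choose 2) = 0" by simp
        have h2: "real s \<le> 1" using \<open>s \<le> 1\<close> by simp
        have h3: "b (n-1) = 1" "b n = 1" using True a1 by (simp_all add: b_def a0)
        have "real s * b (n-1) + real (s choose 2) * b (n-2) = real s"
          by (simp only: h1 h3 mult_zero_left mult_1_right add_0_right)
        then show ?thesis using h2 h3 by linarith
      next
        case nF: False
        then obtain k where k: "n = k + 2" using n1 by (metis add.commute le_Suc_ex le_antisym not_less_eq_eq one_add_one plus_1_eq_Suc)
        have "real s * b (n - 1) + real (s choose 2) * b (n - 2)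
              \<le> real n * b (n - 1) + real (n choose 2) * b (n - 2)"
          by (intro add_mono mult_right_mono bnn) (use sn binomial_right_mono[OF sn] in auto)
        also have "\<dots> = b n"
        proof -
          have c2: "real (n choose 2) = real n * (real n - 1) / 2"
          proof -
            have "2 * (n choose 2) = (k+2) * (k+1)" using k two_choose[of k] by simp
            then have "2 * real (n choose 2) = real (k+2) * real (k+1)" by (metis of_nat_mult of_nat_numeral)
            then show ?thesis using k by (simp add: field_simps)
          qed
          have e1: "n-1 = k+1" "n-2 = k" using k by simp_all
          have bk1: "b (k+1) = (real k + 1) * (fact k * a_seq (k+1))" by (simp add: b_def)
          have fk2: "(fact (k+2) :: real) = (real k + 2) * (real k + 1) * fact k"
            by (simp add: fact_Suc[of "k+1", simplified] algebra_simps)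
          have bn: "b n = (real k + 2) * (real k + 1) * fact k * (a_seq (k+1) + a_seq k / 2)"
            unfolding b_def k fk2 a_rec[of k] ..
          have rn: "real n = real k + 2" "real (n choose 2) = (real k + 2) * (real k + 1) / 2"
            using c2 k by (simp_all add: algebra_simps)
          have bk: "b k = fact k * a_seq k" by (simp add: b_def)
          show ?thesis unfolding e1 bk1 bn rn bk using fin_alg[of "real k" "fact k" "a_seq (k+1)" "a_seq k"] by simp
        qed
        finally show ?thesis .
      qed
    qed
    finally show ?thesis by (simp add: b_def n_def)
  qed
qed

end
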